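(* The sequence $(c_n)_{n\ge1}$ satisfies $c_1=0$ and, for every $n\ge2$, $$c_n=c_{\lceil n/2\rceil}+c_{\lfloor n/2\rfloor}+\lceil n/2\rceil-\lfloor n/2\rfloor;$$ equivalently, $c_{2n}=2c_n$ and $c_{2n+1}=c_{n+1}+c_n+1$ for every $n\ge1$.
   Context: Bifurcating trees: rooted trees in which every internal node has exactly two children; $\mathcal{T}_n$ is the set of isomorphism classes of bifurcating trees with $n$ leaves. For a node $w$, $\kappa_T(w)$ is its number of descendant leaves. The Colless index is $\mathcal{C}(T)=\sum_{v}|\kappa_T(v_1)-\kappa_T(v_2)|$, summed over internal nodes $v$ with children $v_1,v_2$; $c_n=\min\{\mathcal{C}(T):T\in\mathcal{T}_n\}$. *)

theory Defs
  imports Main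
begin

text \<open>Isomorphism classes are handled by taking the
minimum over all trees; the Colless index is isomorphism-invariant.\<close>
datatype btree = Leaf | Node btree btree

fun kappa :: "btree \<Rightarrow> nat" where
  "kappa Leaf = 1"
| "kappa (Node l r) = kappa l + kappa r"

fun colless :: "btree \<Rightarrow> nat" where
  "colless Leaf = 0"
| "colless (Node l r) =
     nat \<bar>int (kappa l) - int (kappa r)\<bar> + colless l + colless r"

definition min_colless :: "nat \<Rightarrow> nat" where
  "min_colless n = Min (colless ` {t. kappa t = n})"

end

theory Submission
  imports Defs
begin

function F :: "nat \<Rightarrow> nat" where
  "F n = (if n \<le> 1 then 0 else F ((n+1) div 2) + F (n div 2) + ((n + 1) div 2 - n div 2))"
  by auto
termination by (relation "measure id") auto

declare F.simps[simp del]

lemma F0: "F 0 = 0" by (subst F.simps) simp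
lemma F1[simp]: "F (Suc 0) = 0" by (subst F.simps) simp
lemma F1': "F 1 = 0" by simp
lemma F2[simp]: "F (Suc (Suc 0)) = 0" by (subst F.simps) simp
lemma F_even: "m \<ge> 1 \<Longrightarrow> F (2*m) = 2 * F m"
  by (subst F.simps) simp
lemma F_odd: "m \<ge> 1 \<Longrightarrow> F (2*m+1) = F (m+1) + F m + 1"
  by (subst F.simps) simp

definition dd :: "nat \<Rightarrow> nat \<Rightarrow> nat" where
  "dd a b = (if b \<le> a then a - b else b - a)"

lemma arEE: "\<lbrakk>(X::nat) \<le> A + B + dd p q; FN = 2*X; FA = 2*A; FB = 2*B\<rbrakk> \<Longrightarrow> FN \<le> FA + FB + dd (2*p) (2*q)"
  unfolding dd_def by (simp split: if_split_asm if_split; linarith)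
lemma arEO: "\<lbrakk>(X::nat) \<le> A + B + dd p (q+1); Y \<le> A + C + dd p q; FN = X+Y+1; FA = 2*A; FB = B+C+1\<rbrakk> \<Longrightarrow> FN \<le> FA + FB + dd (2*p) (2*q+1)"
  unfolding dd_def by (simp split: if_split_asm if_split; linarith)
lemma arEO1: "\<lbrakk>(X::nat) \<le> A + Z + dd p 1; p \<ge> 1; FN = X+A+1; FA = 2*A; FB = 0; Z = 0\<rbrakk> \<Longrightarrow> FN \<le> FA + FB + dd (2*p) 1"
  unfolding dd_def by (simp split: if_split_asm if_split; linarith)
lemma arOE: "\<lbrakk>(X::nat) \<le> A + B + dd (p+1) q; Y \<le> C + B + dd p q; FN = X+Y+1; FA = A+C+1; FB = 2*B\<rbrakk> \<Longrightarrow> FN \<le> FA + FB + dd (2*p+1) (2*q)"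
  unfolding dd_def by (simp split: if_split_asm if_split; linarith)
lemma arOE1: "\<lbrakk>(X::nat) \<le> B + Z + dd q 1; q \<ge> 1; FN = X+B+1; FB = 2*B; FA = 0; Z = 0\<rbrakk> \<Longrightarrow> FN \<le> FA + FB + dd 1 (2*q)"
  unfolding dd_def by (simp split: if_split_asm if_split; linarith)
lemma arOO: "\<lbrakk>(X::nat) \<le> A + B + dd (p+1) q; Y \<le> C + D + dd p (q+1); Y = X; FN = 2*X; FA = A+C+1; FB = D+B+1\<rbrakk> \<Longrightarrow> FN \<le> FA + FB + dd (2*p+1) (2*q+1)"
  unfolding dd_def by (simp split: if_split_asm if_split; linarith)
lemma arOOa: "\<lbrakk>(X::nat) \<le> B + Z + dd q 1; Z = 0; FN = 2*X; FA = 0; FB = X+B+1\<rbrakk> \<Longrightarrow> FN \<le> FA + FB + dd 1 (2*q+1)"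
  unfolding dd_def by (simp split: if_split_asm if_split; linarith)
lemma arOOb: "\<lbrakk>(X::nat) \<le> A + Z + dd p 1; Z = 0; FN = 2*X; FB = 0; FA = X+A+1\<rbrakk> \<Longrightarrow> FN \<le> FA + FB + dd (2*p+1) 1"
  unfolding dd_def by (simp split: if_split_asm if_split; linarith)

lemma F_odd': "m \<ge> 1 \<Longrightarrow> F (2*m+1) = F (m+1) + F m + 1" by (rule F_odd)

lemma key: "F (a+b) \<le> F a + F b + dd a b"
proof (induction "a+b" arbitrary: a b rule: less_induct)
  case less
  show ?case
  proof (cases "a = 0 \<or> b = 0")
    case True then show ?thesis by (auto simp: F0 dd_def)
  next
    case False
    then have a1: "a \<ge> 1" and b1: "b \<ge> 1" by auto
    obtain p where pa: "a = 2*p \<or> a = 2*p+1" by (metis odd_two_times_div_two_succ even_two_times_div_two)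
    obtain q where qb: "b = 2*q \<or> b = 2*q+1" by (metis odd_two_times_div_two_succ even_two_times_div_two)
    show ?thesis
    proof (cases "a = 2*p")
      case ap: True
      then have p1: "p \<ge> 1" using a1 by simp
      show ?thesis
      proof (cases "b = 2*q")
        case bq: True
        then have q1: "q \<ge> 1" using b1 by simp
        have h: "F (p+q) \<le> F p + F q + dd p q" using less[of p q] ap bq p1 q1 by simp
        have "F (2*p + 2*q) \<le> F (2*p) + F (2*q) + dd (2*p) (2*q)"
          apply (rule arEE[OF h])
          using F_even[of "p+q"] F_even[of p] F_even[of q] p1 q1 by (simp_all add: algebra_simps)
        then show ?thesis using ap bq by simp
      next
        case False
        then have bq: "b = 2*q+1" using qb by auto
        show ?thesis
        proof (cases "q = 0")
          case True
          have h: "F (p+1) \<le> F p + F 1 + dd p 1" using less[of p 1] ap bq p1 True by simp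
          have "F (2*p + 1) \<le> F (2*p) + F 1 + dd (2*p) 1"
            apply (rule arEO1[OF h p1])
            using F_odd[of p] F_even[of p] p1 by simp_all
          then show ?thesis using ap bq True by simp
        next
          case False
          have h1: "F (p+(q+1)) \<le> F p + F (q+1) + dd p (q+1)" using less[of p "q+1"] ap bq p1 by simp
          have h2: "F (p+q) \<le> F p + F q + dd p q" using less[of p q] ap bq p1 False by simp
          have "F (2*p + (2*q+1)) \<le> F (2*p) + F (2*q+1) + dd (2*p) (2*q+1)"
            apply (rule arEO[OF h1 h2])
            using F_odd[of "p+q"] F_even[of p] F_odd[of q] p1 False
            by (simp_all add: algebra_simps)
          then show ?thesis using ap bq by simp
        qed
      qed
    next
      case False
      then have ap: "a = 2*p+1" using pa by auto
      show ?thesis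
      proof (cases "b = 2*q")
        case bq: True
        then have q1: "q \<ge> 1" using b1 by simp
        show ?thesis
        proof (cases "p = 0")
          case True
          have h: "F (q+1) \<le> F q + F 1 + dd q 1" using less[of q 1] ap bq q1 True by simp
          have "F (1 + 2*q) \<le> F 1 + F (2*q) + dd 1 (2*q)"
            apply (rule arOE1[OF h q1])
            using F_odd[of q] F_even[of q] q1 by (simp_all add: algebra_simps)
          then show ?thesis using ap bq True by simp
        next
          case False
          have h1: "F ((p+1)+q) \<le> F (p+1) + F q + dd (p+1) q" using less[of "p+1" q] ap bq q1 by simp
          have h2: "F (p+q) \<le> F p + F q + dd p q" using less[of p q] ap bq q1 False by simp
          have "F ((2*p+1) + 2*q) \<le> F (2*p+1) + F (2*q) + dd (2*p+1) (2*q)"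
            apply (rule arOE[OF h1 h2])
            using F_odd[of "p+q"] F_even[of q] F_odd[of p] q1 False
            by (simp_all add: algebra_simps)
          then show ?thesis using ap bq by simp
        qed
      next
        case False
        then have bq: "b = 2*q+1" using qb by auto
        show ?thesis
        proof (cases "p = 0")
          case p0: True
          show ?thesis
          proof (cases "q = 0")
            case True then show ?thesis using p0 ap bq by (simp add: dd_def)
          next
            case False
            have h: "F (q+1) \<le> F q + F 1 + dd q 1" using less[of q 1] ap bq p0 False by simp
            have "F (1 + (2*q+1)) \<le> F 1 + F (2*q+1) + dd 1 (2*q+1)"
              apply (rule arOOa[OF h])
              using F_even[of "q+1"] F_odd[of q] False by (simp_all add: algebra_simps)
            then show ?thesis using ap bq p0 by simp
          qed
        next
          case pn: False
          show ?thesis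
          proof (cases "q = 0")
            case True
            have h: "F (p+1) \<le> F p + F 1 + dd p 1" using less[of p 1] ap bq pn True by simp
            have "F ((2*p+1) + 1) \<le> F (2*p+1) + F 1 + dd (2*p+1) 1"
              apply (rule arOOb[OF h])
              using F_even[of "p+1"] F_odd[of p] pn by (simp_all add: algebra_simps)
            then show ?thesis using ap bq True by simp
          next
            case False
            have h1: "F ((p+1)+q) \<le> F (p+1) + F q + dd (p+1) q" using less[of "p+1" q] ap bq by simp
            have h2: "F (p+(q+1)) \<le> F p + F (q+1) + dd p (q+1)" using less[of p "q+1"] ap bq by simp
            have "F ((2*p+1) + (2*q+1)) \<le> F (2*p+1) + F (2*q+1) + dd (2*p+1) (2*q+1)"
              apply (rule arOO[OF h1 h2])
              using F_odd[of p] F_odd[of q] F_even[of "p+q+1"] pn False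
              by (simp_all add: algebra_simps)
            then show ?thesis using ap bq by simp
          qed
        qed
      qed
    qed
  qed
qed

lemma kappa_pos: "kappa t \<ge> 1" by (induction t) auto

lemma lower: "F (kappa t) \<le> colless t"
proof (induction t)
  case Leaf then show ?case by (simp add: F1)
next
  case (Node l r)
  have e: "nat \<bar>int (kappa l) - int (kappa r)\<bar> = dd (kappa l) (kappa r)" unfolding dd_def by (cases "kappa r \<le> kappa l") auto
  have c: "colless (Node l r) = dd (kappa l) (kappa r) + colless l + colless r"
    by (simp only: colless.simps e)
  show ?case unfolding kappa.simps c using key[of "kappa l" "kappa r"] Node.IH by linarith
qed

function bal :: "nat \<Rightarrow> btree" where
  "bal n = (if n \<le> 1 then Leaf else Node (bal ((n+1) div 2)) (bal (n div 2)))"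
  by auto
termination by (relation "measure id") auto

declare bal.simps[simp del]

lemma bal_props: "n \<ge> 1 \<Longrightarrow> kappa (bal n) = n \<and> colless (bal n) = F n"
proof (induction n rule: less_induct)
  case (less n)
  show ?case
  proof (cases "n \<le> 1")
    case True then have "n = 1" using less.prems by simp
    then show ?thesis by (simp add: bal.simps F1)
  next
    case False
    have i1: "kappa (bal ((n+1) div 2)) = (n+1) div 2 \<and> colless (bal ((n+1) div 2)) = F ((n+1) div 2)"
      using less.IH[of "(n+1) div 2"] False by simp
    have i2: "kappa (bal (n div 2)) = n div 2 \<and> colless (bal (n div 2)) = F (n div 2)"
      using less.IH[of "n div 2"] False by simp
    have b: "bal n = Node (bal ((n+1) div 2)) (bal (n div 2))" using False by (subst bal.simps) simp
    have f: "F n = F ((n+1) div 2) + F (n div 2) + ((n + 1) div 2 - n div 2)"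
      using False by (subst F.simps) simp
    have na: "nat \<bar>int ((n+1) div 2) - int (n div 2)\<bar> = (n+1) div 2 - n div 2" by arith
    have s: "(n+1) div 2 + n div 2 = n" by arith
    have k: "kappa (bal n) = n" unfolding b kappa.simps using i1 i2 s by simp
    have c0: "colless (bal n) = nat \<bar>int ((n+1) div 2) - int (n div 2)\<bar> + F ((n+1) div 2) + F (n div 2)"
      unfolding b colless.simps using i1 i2 by simp
    have c: "colless (bal n) = F n" unfolding c0 na f by (simp only: ac_simps)
    show ?thesis using k c by simp
  qed
qed

lemma fin: "finite {t. kappa t \<le> n}"
proof (induction n)
  case 0
  have "\<not> kappa t \<le> 0" for t using kappa_pos[of t] by simp
  then have e: "{t. kappa t \<le> 0} = {}" by blast
  show ?case by (subst e) simp
next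
  case (Suc n)
  have "{t. kappa t \<le> Suc n} \<subseteq> insert Leaf ((\<lambda>(l,r). Node l r) ` ({t. kappa t \<le> n} \<times> {t. kappa t \<le> n}))"
  proof
    fix t assume tk: "t \<in> {t. kappa t \<le> Suc n}"
    show "t \<in> insert Leaf ((\<lambda>(l,r). Node l r) ` ({t. kappa t \<le> n} \<times> {t. kappa t \<le> n}))"
    proof (cases t)
      case Leaf then show ?thesis by simp
    next
      case (Node l r)
      have "kappa l \<ge> 1" "kappa r \<ge> 1" by (rule kappa_pos)+
      then have "kappa l \<le> n" "kappa r \<le> n" using tk Node by simp_all
      then have "(l, r) \<in> {t. kappa t \<le> n} \<times> {t. kappa t \<le> n}" by simp
      then have "(\<lambda>(l,r). Node l r) (l, r) \<in> (\<lambda>(l,r). Node l r) ` ({t. kappa t \<le> n} \<times> {t. kappa t \<le> n})"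
        by (rule imageI)
      then show ?thesis using Node by simp
    qed
  qed
  moreover have "finite (insert Leaf ((\<lambda>(l,r). Node l r) ` ({t. kappa t \<le> n} \<times> {t. kappa t \<le> n})))"
    using Suc by (intro finite.insertI finite_imageI finite_cartesian_product)
  ultimately show ?case by (rule finite_subset)
qed

lemma min_colless_F: "n \<ge> 1 \<Longrightarrow> min_colless n = F n"
  unfolding min_colless_def
proof (rule Min_eqI)
  show "finite (colless ` {t. kappa t = n})"
    by (rule finite_imageI, rule finite_subset[OF _ fin[of n]]) auto
  show "\<And>y. y \<in> colless ` {t. kappa t = n} \<Longrightarrow> F n \<le> y" using lower by auto
  assume "n \<ge> 1"
  then show "F n \<in> colless ` {t. kappa t = n}" using bal_props[of n] by force
qed

theorem corollary3:
  shows "min_colless 1 = 0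
    \<and> (\<forall>n\<ge>2. min_colless n =
          min_colless ((n + 1) div 2) + min_colless (n div 2)
          + ((n + 1) div 2 - n div 2))
    \<and> (\<forall>n\<ge>1. min_colless (2 * n) = 2 * min_colless n
          \<and> min_colless (2 * n + 1) = min_colless (n + 1) + min_colless n + 1)"
proof (intro conjI allI impI)
  show "min_colless 1 = 0" by (simp add: min_colless_F F1)
next
  fix n :: nat assume n: "n \<ge> 2"
  then show "min_colless n = min_colless ((n + 1) div 2) + min_colless (n div 2) + ((n + 1) div 2 - n div 2)"
    by (simp add: min_colless_F) (subst F.simps, simp)
next
  fix n :: nat assume "n \<ge> 1"
  then show "min_colless (2 * n) = 2 * min_colless n" by (simp add: min_colless_F F_even)
next
  fix n :: nat assume "n \<ge> 1"
  then show "min_colless (2 * n + 1) = min_colless (n + 1) + min_colless n + 1"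
    using F_odd[of n] by (simp add: min_colless_F)
qed

end
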